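(* Let $(E,\|\cdot\|_E)$, $(F,\|\cdot\|_F)$ be normed vector spaces, $\Omega\subseteq E$, $f:\Omega\to F$, and $\mathfrak{X}\subseteq\Omega$. Assume $f$ is $\beta$-Lipschitz on $\mathfrak{X}$, i.e. $\|f(x)-f(y)\|_F\le\beta\|x-y\|_E$ for all $x,y\in\mathfrak{X}$. Then for any $\eta>0$ and $\varepsilon>0$, $$\mathcal{N}(S^+_\eta[f(\mathfrak{X})],\|\cdot\|_F,\varepsilon)\le\mathcal{N}\Big(\mathfrak{X},\|\cdot\|_E,\frac{\eta}{16\beta}\varepsilon\Big)^2.$$
   Context: For a subset $\mathfrak{Y}$ of a normed space, $\mathcal{N}(\mathfrak{Y},\|\cdot\|,\varepsilon)$ is the minimal number of closed balls of radius $\varepsilon$ with centers in $\mathfrak{Y}$ needed to cover $\mathfrak{Y}$. The set of long chords is $S^+_\eta[f(\mathfrak{X})]=\{(f(x)-f(y))/\|f(x)-f(y)\|_F:\ x,y\in\mathfrak{X},\ \|f(x)-f(y)\|_F>\eta\}$. *)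

theory Defs
  imports "HOL-Analysis.Analysis" "HOL-Library.Extended_Nat"
begin

text \<open>Covering number: minimal number of closed balls of radius e with centers in Y
  needed to cover Y; infinity if no finite such cover exists.\<close>
definition covering_number :: "'a::metric_space set \<Rightarrow> real \<Rightarrow> enat" where
  "covering_number Y e =
     Inf {enat (card C) | C. finite C \<and> C \<subseteq> Y \<and> Y \<subseteq> (\<Union>c\<in>C. cball c e)}"

definition long_chords :: "real \<Rightarrow> ('a \<Rightarrow> 'b::real_normed_vector) \<Rightarrow> 'a set \<Rightarrow> 'b set" where
  "long_chords \<eta> f X =
     {(f x - f y) /\<^sub>R norm (f x - f y) | x y. x \<in> X \<and> y \<in> X \<and> norm (f x - f y) > \<eta>}"

end

theory Submission
  imports Defs
begin

lemma unit_diff: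
  fixes u v :: "'b::real_normed_vector"
  assumes "u \<noteq> 0" "v \<noteq> 0"
  shows "norm (u /\<^sub>R norm u - v /\<^sub>R norm v) \<le> 2 * norm (u - v) / norm u"
proof -
  have nu: "norm u > 0" and nv: "norm v > 0" using assms by auto
  have eq: "u /\<^sub>R norm u - v /\<^sub>R norm v
      = (u - v) /\<^sub>R norm u + ((norm v - norm u) / (norm u * norm v)) *\<^sub>R v"
  proof -
    have sc: "1 / norm u = 1 / norm v + (norm v - norm u) / (norm u * norm v)"
      using nu nv by (simp add: field_simps)
    have "u /\<^sub>R norm u - v /\<^sub>R norm v = (u - v) /\<^sub>R norm u + (1 / norm u) *\<^sub>R v - (1 / norm v) *\<^sub>R v"
      by (simp add: algebra_simps scaleR_diff_right inverse_eq_divide)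
    also have "\<dots> = (u - v) /\<^sub>R norm u + ((norm v - norm u) / (norm u * norm v)) *\<^sub>R v"
      unfolding sc by (simp add: scaleR_add_left)
    finally show ?thesis .
  qed
  have "norm (u /\<^sub>R norm u - v /\<^sub>R norm v)
      \<le> norm ((u - v) /\<^sub>R norm u) + norm (((norm v - norm u) / (norm u * norm v)) *\<^sub>R v)"
    unfolding eq by (rule norm_triangle_ineq)
  also have "norm ((u - v) /\<^sub>R norm u) = norm (u - v) / norm u" using nu by (simp add: divide_inverse_commute)
  also have "norm (((norm v - norm u) / (norm u * norm v)) *\<^sub>R v) = \<bar>norm v - norm u\<bar> / norm u"
    using nu nv by (simp add: abs_mult)
  also have "\<bar>norm v - norm u\<bar> / norm u \<le> norm (u - v) / norm u"
    using nu by (intro divide_right_mono) (metis norm_minus_commute norm_triangle_ineq3, simp)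
  finally show ?thesis by simp
qed

lemma cover_bound:
  fixes X :: "'a::real_normed_vector set"
    and f :: "'a \<Rightarrow> 'b::real_normed_vector"
    and \<beta> \<eta> \<epsilon> \<delta> :: real
  assumes "\<beta> > 0"
    and lip: "\<forall>x\<in>X. \<forall>y\<in>X. norm (f x - f y) \<le> \<beta> * norm (x - y)"
    and "\<eta> > 0" and "\<epsilon> > 0"
    and \<delta>: "\<delta> = \<eta> / (16 * \<beta>) * \<epsilon>"
    and C: "finite C" "C \<subseteq> X" "X \<subseteq> (\<Union>c\<in>C. cball c \<delta>)"
  shows "covering_number (long_chords \<eta> f X) \<epsilon> \<le> enat (card C) ^ 2"
proof -
  define S where "S = long_chords \<eta> f X"
  define cell where "cell c d = {(f x - f y) /\<^sub>R norm (f x - f y) | x y. x \<in> X \<and> y \<in> X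
      \<and> dist c x \<le> \<delta> \<and> dist d y \<le> \<delta> \<and> norm (f x - f y) > \<eta>}" for c d
  define D where "D = {p \<in> C \<times> C. cell (fst p) (snd p) \<noteq> {}}"
  define g where "g p = (SOME s. s \<in> cell (fst p) (snd p))" for p
  define B where "B = g ` D"
  have finD: "finite D" unfolding D_def using C(1) by simp
  have "card B \<le> card D" unfolding B_def using finD by (rule card_image_le)
  also have "card D \<le> card (C \<times> C)" unfolding D_def using C(1) by (intro card_mono) auto
  also have "card (C \<times> C) = card C ^ 2" by (simp add: card_cartesian_product power2_eq_square)
  finally have cardB: "card B \<le> card C ^ 2" .
  have gin: "g p \<in> cell (fst p) (snd p)" if "p \<in> D" for p
    using that unfolding D_def g_def by (auto intro: someI_ex)
  have BS: "B \<subseteq> S" unfolding B_def S_def long_chords_def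
    using gin unfolding cell_def by fastforce
  have cov: "S \<subseteq> (\<Union>b\<in>B. cball b \<epsilon>)"
  proof
    fix s assume "s \<in> S"
    then obtain x y where xy: "x \<in> X" "y \<in> X" "norm (f x - f y) > \<eta>"
      "s = (f x - f y) /\<^sub>R norm (f x - f y)"
      unfolding S_def long_chords_def by auto
    obtain c where c: "c \<in> C" "dist c x \<le> \<delta>" using C(3) xy(1) by auto
    obtain d where d: "d \<in> C" "dist d y \<le> \<delta>" using C(3) xy(2) by auto
    have "s \<in> cell c d" unfolding cell_def using xy c d by auto
    hence pD: "(c, d) \<in> D" unfolding D_def using c d by auto
    from gin[OF pD] obtain x' y' where xy': "x' \<in> X" "y' \<in> X" "dist c x' \<le> \<delta>" "dist d y' \<le> \<delta>"
      "norm (f x' - f y') > \<eta>" "g (c, d) = (f x' - f y') /\<^sub>R norm (f x' - f y')"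
      unfolding cell_def by auto
    define u where "u = f x - f y"
    define v where "v = f x' - f y'"
    have u0: "u \<noteq> 0" "norm u > \<eta>" using xy `\<eta> > 0` unfolding u_def by auto
    have v0: "v \<noteq> 0" using xy' `\<eta> > 0` unfolding v_def by auto
    have "norm (x - x') \<le> 2 * \<delta>" using c xy'(3) dist_triangle3[of x x' c]
      by (simp add: dist_norm)
    have "norm (y - y') \<le> 2 * \<delta>" using d xy'(4) dist_triangle3[of y y' d]
      by (simp add: dist_norm)
    have "u - v = (f x - f x') - (f y - f y')" unfolding u_def v_def by (simp add: algebra_simps)
    hence "norm (u - v) \<le> norm (f x - f x') + norm (f y - f y')"
      by (metis norm_triangle_ineq4)
    also have "\<dots> \<le> \<beta> * norm (x - x') + \<beta> * norm (y - y')"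
      using lip xy xy' by (meson add_mono)
    also have "\<dots> \<le> \<beta> * (2 * \<delta>) + \<beta> * (2 * \<delta>)"
      using `\<beta> > 0` `norm (x - x') \<le> 2 * \<delta>` `norm (y - y') \<le> 2 * \<delta>`
      by (intro add_mono mult_left_mono) auto
    also have "\<dots> = \<eta> * \<epsilon> / 4" using `\<beta> > 0` unfolding \<delta> by (simp add: field_simps)
    finally have uv: "norm (u - v) \<le> \<eta> * \<epsilon> / 4" .
    have "norm (s - g (c, d)) \<le> 2 * norm (u - v) / norm u"
      using unit_diff[OF u0(1) v0] xy(4) xy'(6) unfolding u_def v_def by simp
    also have "\<dots> \<le> 2 * (\<eta> * \<epsilon> / 4) / \<eta>"
      using u0 uv `\<eta> > 0` `\<epsilon> > 0`
      by (intro frac_le) (auto simp: mult.commute)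
    also have "\<dots> \<le> \<epsilon>" using `\<eta> > 0` `\<epsilon> > 0` by simp
    finally have "dist (g (c, d)) s \<le> \<epsilon>" by (simp add: dist_norm norm_minus_commute)
    thus "s \<in> (\<Union>b\<in>B. cball b \<epsilon>)" unfolding B_def using pD by auto
  qed
  have "covering_number S \<epsilon> \<le> enat (card B)"
    unfolding covering_number_def
  proof (rule Inf_lower, intro CollectI exI conjI)
    show "enat (card B) = enat (card B)" ..
    show "finite B" unfolding B_def using finD by simp
  qed (use BS cov in auto)
  also have "\<dots> \<le> enat (card C) ^ 2" using cardB by (simp add: numeral_2_eq_2)
  finally show ?thesis unfolding S_def .
qed

theorem proposition1:
  fixes \<Omega> X :: "'a::real_normed_vector set"
    and f :: "'a \<Rightarrow> 'b::real_normed_vector"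
    and \<beta> \<eta> \<epsilon> :: real
  assumes "X \<subseteq> \<Omega>"
    and "\<beta> > 0"
    and "\<forall>x\<in>X. \<forall>y\<in>X. norm (f x - f y) \<le> \<beta> * norm (x - y)"
    and "\<eta> > 0" and "\<epsilon> > 0"
  shows "covering_number (long_chords \<eta> f X) \<epsilon>
           \<le> (covering_number X (\<eta> / (16 * \<beta>) * \<epsilon>)) ^ 2"
proof -
  define A where "A = {enat (card C) | C. finite C \<and> C \<subseteq> X
      \<and> X \<subseteq> (\<Union>c\<in>C. cball c (\<eta> / (16 * \<beta>) * \<epsilon>))}"
  have cn: "covering_number X (\<eta> / (16 * \<beta>) * \<epsilon>) = Inf A"
    unfolding covering_number_def A_def ..
  show ?thesis
  proof (cases "A = {}")
    case True
    hence "covering_number X (\<eta> / (16 * \<beta>) * \<epsilon>) = \<infinity>" using cn by (simp add: top_enat_def)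
    thus ?thesis by (simp add: numeral_2_eq_2)
  next
    case False
    then obtain k where "k \<in> A" by auto
    hence "Inf A \<in> A" by (rule wellorder_InfI)
    then obtain C where C: "Inf A = enat (card C)" "finite C" "C \<subseteq> X"
      "X \<subseteq> (\<Union>c\<in>C. cball c (\<eta> / (16 * \<beta>) * \<epsilon>))" unfolding A_def by auto
    show ?thesis unfolding cn C(1)
      using cover_bound[OF assms(2,3,4,5) refl C(2,3,4)] .
  qed
qed

end
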